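(* Let $n\ge4$, let $c,\gamma\in\mathbb{F}_{2^n}\setminus\{0,1\}$, and let $F=\mathrm{Inv}\circ(0,1,\gamma)$. Then $3\le{}_c\Delta_F\le5$.
   Context: $\mathrm{Inv}(x)=x^{2^n-2}$ on $\mathbb{F}_{2^n}$. $(0,1,\gamma)$ is the $3$-cycle sending $0\mapsto1$, $1\mapsto\gamma$, $\gamma\mapsto0$ and fixing all other elements; thus $F(0)=1$, $F(1)=\gamma^{-1}$, $F(\gamma)=0$ and $F(x)=x^{-1}$ otherwise. For $c\in\mathbb{F}_{2^n}$, ${}_cD_aF(x)=F(x+a)+cF(x)$; ${}_c\Delta_F(a,b)$ is the number of $x\in\mathbb{F}_{2^n}$ with ${}_cD_aF(x)=b$; and ${}_c\Delta_F=\max\{{}_c\Delta_F(a,b): a,b\in\mathbb{F}_{2^n},\ a\neq 0 \text{ if } c=1\}$. *)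

theory Defs
  imports Main "HOL-Library.Cardinality"
begin

text \<open>The field F_{2^n} is modelled as an arbitrary finite field type 'a with
  CARD('a) = 2^n (unique up to isomorphism).\<close>

definition Inv :: "'a::{field,finite} \<Rightarrow> 'a" where
  "Inv x = x ^ (CARD('a) - 2)"

definition cyc3 :: "'a::field \<Rightarrow> 'a \<Rightarrow> 'a" where
  "cyc3 \<gamma> x = (if x = 0 then 1 else if x = 1 then \<gamma> else if x = \<gamma> then 0 else x)"

definition cDeltaAt :: "('a::{field,finite} \<Rightarrow> 'a) \<Rightarrow> 'a \<Rightarrow> 'a \<Rightarrow> 'a \<Rightarrow> nat" where
  "cDeltaAt F c a b = card {x. F (x + a) + c * F x = b}"

definition cDelta :: "('a::{field,finite} \<Rightarrow> 'a) \<Rightarrow> 'a \<Rightarrow> nat" where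
  "cDelta F c = Max {cDeltaAt F c a b | a b. a \<noteq> 0 \<or> c \<noteq> 1}"

end

theory Submission
  imports Defs "HOL-Computational_Algebra.Polynomial"
begin

lemma fermat_fin:
  fixes x :: "'a::{field,finite}"
  assumes "x \<noteq> 0"
  shows "x ^ (CARD('a) - 1) = 1"
proof -
  let ?S = "UNIV - {0::'a}"
  have bij: "bij_betw ((*) x) ?S ?S"
    unfolding bij_betw_def inj_on_def
  proof (intro conjI ballI impI)
    show "(*) x ` ?S = ?S"
    proof
      show "(*) x ` ?S \<subseteq> ?S" using assms by auto
      show "?S \<subseteq> (*) x ` ?S"
      proof
        fix y assume "y \<in> ?S"
        then have "y = x * (y / x)" "y / x \<in> ?S" using assms by auto
        then show "y \<in> (*) x ` ?S" by blast
      qed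
    qed
  qed (use assms in auto)
  have "(\<Prod>y\<in>?S. x * y) = (\<Prod>y\<in>?S. y)"
    using prod.reindex_bij_betw[OF bij, of id] by simp
  moreover have "(\<Prod>y\<in>?S. x * y) = x ^ card ?S * (\<Prod>y\<in>?S. y)"
    by (simp add: prod.distrib)
  moreover have "card ?S = CARD('a) - 1"
    by (simp add: card_Diff_subset)
  moreover have "(\<Prod>y\<in>?S. y) \<noteq> 0" by simp
  ultimately show ?thesis by simp
qed

lemma Inv_inverse:
  assumes "CARD('a::{field,finite}) \<ge> 3"
  shows "Inv (x::'a) = inverse x"
proof (cases "x = 0")
  case True
  then show ?thesis using assms by (simp add: Inv_def)
next
  case False
  have "x * Inv x = x ^ (CARD('a) - 1)"
  proof -
    have "CARD('a) - 1 = Suc (CARD('a) - 2)" using assms by simp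
    then show ?thesis unfolding Inv_def by simp
  qed
  then have "x * Inv x = 1" using fermat_fin[OF False] by simp
  then show ?thesis using False by (simp add: field_simps)
qed

lemma char2_add: assumes "(1::'a::comm_ring_1)+1=0" shows "(x::'a) + x = 0"
proof -
  have "x + x = x * (1+1)" by (simp add: algebra_simps)
  then show ?thesis using assms by simp
qed

lemma char2_neg: assumes "(1::'a::comm_ring_1)+1=0" shows "- (x::'a) = x"
  using char2_add[OF assms, of x] by (simp add: add_eq_0_iff)

lemma cyc3_inj:
  fixes \<gamma> :: "'a::field"
  assumes "\<gamma> \<noteq> 0" "\<gamma> \<noteq> 1"
  shows "inj (cyc3 \<gamma>)"
  using assms unfolding inj_def cyc3_def by (auto split: if_splits)

lemma card_le1_pair:
  fixes A :: "'a::finite set"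
  assumes "\<And>x y. x \<in> A \<Longrightarrow> y \<in> A \<Longrightarrow> x = y"
  shows "card A \<le> 1"
  using assms card_le_Suc0_iff_eq[of A] by simp

lemma card_quad:
  fixes A B C :: "'a::{field,finite}"
  assumes "\<And>t. P t - Q t = A*t^2 + B*t + C" and "A \<noteq> 0 \<or> B \<noteq> 0 \<or> C \<noteq> 0"
  shows "card {t. P t = Q t} \<le> 2"
proof -
  have S: "{t. P t = Q t} = {t. A*t^2 + B*t + C = 0}"
  proof -
    have "P t = Q t \<longleftrightarrow> A*t^2 + B*t + C = 0" for t
    proof -
      have "P t = Q t \<longleftrightarrow> P t - Q t = 0" by simp
      then show ?thesis using assms(1)[of t] by simp
    qed
    then show ?thesis by simp
  qed
  show ?thesis
  proof (cases "{t. A*t^2 + B*t + C = 0} = {}")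
    case True then show ?thesis by (simp add: S)
  next
    case False
    then obtain t1 where t1: "A*t1^2 + B*t1 + C = 0" by auto
    have sub: "{t. A*t^2 + B*t + C = 0} \<subseteq> insert t1 {t. A*t + (A*t1 + B) = 0}"
    proof
      fix t assume "t \<in> {t. A*t^2 + B*t + C = 0}"
      then have "A*t^2 + B*t + C = 0" by simp
      moreover have "(t - t1) * (A*t + (A*t1 + B)) = (A*t^2 + B*t + C) - (A*t1^2 + B*t1 + C)"
        by (simp add: algebra_simps power2_eq_square)
      ultimately have "(t - t1) * (A*t + (A*t1 + B)) = 0"
        using t1 by simp
      then show "t \<in> insert t1 {t. A*t + (A*t1 + B) = 0}" by auto
    qed
    have lin: "card {t. A*t + (A*t1 + B) = 0} \<le> 1"
    proof (rule card_le1_pair)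
      fix x y assume "x \<in> {t. A*t + (A*t1 + B) = 0}" "y \<in> {t. A*t + (A*t1 + B) = 0}"
      then have hx: "A*x + (A*t1 + B) = 0" and hy: "A*y + (A*t1 + B) = 0" by auto
      have "A * (x - y) = (A*x + (A*t1 + B)) - (A*y + (A*t1 + B))" by (simp add: algebra_simps)
      then have "A * (x - y) = 0" using hx hy by simp
      moreover have "A \<noteq> 0"
      proof
        assume "A = 0"
        then have "B = 0" using hx by simp
        then have "C = 0" using t1 \<open>A = 0\<close> by simp
        then show False using assms(2) \<open>A = 0\<close> \<open>B = 0\<close> by simp
      qed
      ultimately show "x = y" by simp
    qed
    have "card {t. A*t^2 + B*t + C = 0} \<le> card (insert t1 {t. A*t + (A*t1 + B) = 0})"
      by (rule card_mono[OF _ sub]) simp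
    also have "\<dots> \<le> Suc (card {t. A*t + (A*t1 + B) = 0})" by (rule card_insert_le_m1) simp_all
    finally show ?thesis using lin S by simp
  qed
qed

lemma upper_bound:
  fixes c \<gamma> a b :: "'a::{field,finite}"
  assumes ch: "(1::'a)+1=0" and c0: "c \<noteq> 0" and c1: "c \<noteq> 1" and g0: "\<gamma> \<noteq> 0" and g1: "\<gamma> \<noteq> 1"
  defines "F \<equiv> (\<lambda>x. inverse (cyc3 \<gamma> x))"
  shows "card {x. F (x + a) + c * F x = b} \<le> 5"
proof -
  let ?S = "{x. F (x + a) + c * F x = b}"
  have injF: "inj F" unfolding F_def using cyc3_inj[OF g0 g1]
    by (simp add: inj_def)
  have neg: "\<And>x::'a. - x = x" using char2_neg[OF ch] .
  have xx: "\<And>x::'a. x + x = 0" using char2_add[OF ch] .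
  have c1': "1 - c \<noteq> 0" using c1 by simp
  show ?thesis
  proof (cases "a = 0")
    case True
    have "card ?S \<le> 1"
    proof (rule card_le1_pair)
      fix x y assume "x \<in> ?S" "y \<in> ?S"
      then have "(1 + c) * F x = (1 + c) * F y" using True by (simp add: algebra_simps)
      moreover have "1 + c \<noteq> 0"
      proof
        assume "1 + c = 0"
        then have "c = - 1" by (simp add: eq_neg_iff_add_eq_0 add.commute)
        then show False using c1 neg[of 1] by simp
      qed
      ultimately have "F x = F y" by simp
      then show "x = y" using injF by (simp add: inj_def)
    qed
    then show ?thesis by simp
  next
    case False
    have pair: "card (?S \<inter> {z, z + a}) \<le> 1" for z
    proof (rule card_le1_pair)
      have key: False if "z \<in> ?S" "z + a \<in> ?S"
      proof -
        have e1: "F (z + a) + c * F z = b" using that(1) by simp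
        have "z + a + a = z" using xx by (simp add: add.assoc)
        moreover have "F (z + a + a) + c * F (z + a) = b" using that(2) by (simp only: mem_Collect_eq)
        ultimately have e2: "F z + c * F (z + a) = b" by (simp only:)
        have "(F (z + a) - F z) * (1 - c) = (F (z + a) + c * F z) - (F z + c * F (z + a))"
          by (simp add: algebra_simps)
        then have "(F (z + a) - F z) * (1 - c) = 0" using e1 e2 by simp
        then have "F (z + a) = F z" using c1' by simp
        then have "z + a = z" using injF unfolding inj_def by blast
        then show False using False by simp
      qed
      fix x y assume "x \<in> ?S \<inter> {z, z + a}" "y \<in> ?S \<inter> {z, z + a}"
      then have hx: "x \<in> ?S" "x = z \<or> x = z + a" and hy: "y \<in> ?S" "y = z \<or> y = z + a"
        by (simp_all only: Int_iff insert_iff empty_iff simp_thms)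
      show "x = y"
      proof (rule ccontr)
        assume "x \<noteq> y"
        then have "(x = z \<and> y = z + a) \<or> (x = z + a \<and> y = z)" using hx(2) hy(2) by blast
        then show False using key hx(1) hy(1) by blast
      qed
    qed
    let ?E = "{0, a, 1, 1 + a, \<gamma>, \<gamma> + a}"
    have gen: "?S - ?E \<subseteq> {x. b*x^2 + (b*a - 1 - c)*x + (-(c*a)) = 0}"
    proof
      fix x assume "x \<in> ?S - ?E"
      then have hx: "F (x + a) + c * F x = b" and nx: "x \<notin> ?E" by auto
      have x0: "x \<noteq> 0" "x \<noteq> 1" "x \<noteq> \<gamma>" using nx by auto
      have xa0: "x + a \<noteq> 0"
      proof
        assume "x + a = 0" then have "x = - a" by (simp add: eq_neg_iff_add_eq_0)
        then show False using nx neg by simp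
      qed
      have xa1: "x + a \<noteq> 1"
      proof
        assume "x + a = 1" then have "x = 1 - a" by (simp add: algebra_simps eq_diff_eq)
        then have "x = 1 + a" using neg[of a] by simp
        then show False using nx by simp
      qed
      have xag: "x + a \<noteq> \<gamma>"
      proof
        assume "x + a = \<gamma>" then have "x = \<gamma> - a" by (simp add: algebra_simps eq_diff_eq)
        then have "x = \<gamma> + a" using neg[of a] by simp
        then show False using nx by simp
      qed
      have "F x = inverse x" "F (x + a) = inverse (x + a)"
        unfolding F_def cyc3_def using x0 xa0 xa1 xag by auto
      then have "inverse (x + a) + c * inverse x = b" using hx by simp
      then have "x + c * (x + a) = b * (x * (x + a))" using x0 xa0
        by (simp add: field_simps)
      then have "b*x^2 + (b*a - 1 - c)*x + (-(c*a)) = b * (x * (x + a)) - (x + c * (x + a))"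
        by (simp add: algebra_simps power2_eq_square)
      then show "x \<in> {x. b*x^2 + (b*a - 1 - c)*x + (-(c*a)) = 0}"
        using \<open>x + c * (x + a) = b * (x * (x + a))\<close> by simp
    qed
    have gcard: "card {x. b*x^2 + (b*a - 1 - c)*x + (-(c*a)) = 0} \<le> 2"
      using card_quad[of "\<lambda>x. b*x^2 + (b*a - 1 - c)*x + (-(c*a))" "\<lambda>x. 0" b "b*a - 1 - c" "-(c*a)"]
        c0 False by simp
    have split: "?S \<subseteq> (?S \<inter> {0, 0 + a}) \<union> (?S \<inter> {1, 1 + a}) \<union> (?S \<inter> {\<gamma>, \<gamma> + a}) \<union> (?S - ?E)"
      by auto
    define P0 where "P0 = ?S \<inter> {0, 0 + a}"
    define P1 where "P1 = ?S \<inter> {1, 1 + a}"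
    define P2 where "P2 = ?S \<inter> {\<gamma>, \<gamma> + a}"
    define G where "G = ?S - ?E"
    have "card ?S \<le> card (P0 \<union> P1 \<union> P2 \<union> G)"
      unfolding P0_def P1_def P2_def G_def by (rule card_mono[OF _ split]) simp
    also have "\<dots> \<le> card (P0 \<union> P1 \<union> P2) + card G" by (rule card_Un_le)
    also have "card (P0 \<union> P1 \<union> P2) \<le> card (P0 \<union> P1) + card P2" by (rule card_Un_le)
    also have "card (P0 \<union> P1) \<le> card P0 + card P1" by (rule card_Un_le)
    also have "card P0 \<le> 1" unfolding P0_def by (rule pair)
    also have "card P1 \<le> 1" unfolding P1_def by (rule pair)
    also have "card P2 \<le> 1" unfolding P2_def by (rule pair)
    also have "card G \<le> 2" unfolding G_def
      using card_mono[OF _ gen] gcard by (meson finite le_trans)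
    finally show ?thesis by simp
  qed
qed

lemma cu: "card (X::'a::finite set) \<le> m \<Longrightarrow> card Y \<le> n \<Longrightarrow> card (X \<union> Y) \<le> m + n"
  using card_Un_le[of X Y] by linarith

lemma lower_big:
  fixes c \<gamma> :: "'a::{field,finite}"
  assumes ch: "(1::'a)+1=0" and c0: "c \<noteq> 0" and c1: "c \<noteq> 1" and g0: "\<gamma> \<noteq> 0" and g1: "\<gamma> \<noteq> 1"
    and big: "CARD('a) \<ge> 29"
  defines "F \<equiv> (\<lambda>x. inverse (cyc3 \<gamma> x))"
  shows "\<exists>a b. 3 \<le> card {x. F (x + a) + c * F x = b}"
proof -
  have neg: "\<And>x::'a. - x = x" using char2_neg[OF ch] .
  have two0: "(2::'a) = 0" using ch by simp
  have gm1: "\<gamma> - 1 \<noteq> 0" using g1 by simp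
  define D where "D = (\<lambda>t::'a. t^2 + c*t + c)"
  define bad where "bad = {t. t = 0} \<union> {t. t = c} \<union> {t. t + 1 + c = 0} \<union> {t. D t = 0}
     \<union> {t. \<gamma>*t*(t+c) = D t} \<union> {t. \<gamma>*t = D t} \<union> {t. t = D t} \<union> {t. c*\<gamma>*(t+1+c) = D t}
     \<union> {t. \<gamma>*(t+c)*(t+1+c) = D t} \<union> {t. (t+c)*(t+1+c) = D t} \<union> {t. \<gamma>*(t+c) = D t}
     \<union> {t. t*(t+c) = c*(t+1+c)} \<union> {t. t + c = D t} \<union> {t. c*(t+1+c) = D t}"
  have q: "\<And>P Q A B C. (\<And>t::'a. P t - Q t = A*t^2 + B*t + C) \<Longrightarrow> A \<noteq> 0 \<or> B \<noteq> 0 \<or> C \<noteq> 0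
      \<Longrightarrow> card {t. P t = Q t} \<le> 2"
    by (rule card_quad)
  have "card bad \<le> 2+2+2+2+2+2+2+2+2+2+2+2+2+2"
    unfolding bad_def
    apply (intro cu)
    subgoal by (rule q[where A=0 and B=1 and C=0]) simp_all
    subgoal by (rule q[where A=0 and B=1 and C="-c"]) simp_all
    subgoal by (rule q[where A=0 and B=1 and C="1+c"]) simp_all
    subgoal by (rule q[where A=1 and B=c and C=c]) (simp_all add: D_def)
    subgoal by (rule q[where A="\<gamma>-1" and B="\<gamma>*c-c" and C="-c"]) (simp_all add: D_def c0 power2_eq_square algebra_simps)
    subgoal by (rule q[where A="-1" and B="\<gamma>-c" and C="-c"]) (simp_all add: D_def power2_eq_square algebra_simps)
    subgoal by (rule q[where A="-1" and B="1-c" and C="-c"]) (simp_all add: D_def power2_eq_square algebra_simps)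
    subgoal by (rule q[where A="-1" and B="c*\<gamma>-c" and C="c*\<gamma>*(1+c)-c"]) (simp_all add: D_def power2_eq_square algebra_simps)
    subgoal by (rule q[where A="\<gamma>-1" and B="\<gamma>*(1+2*c)-c" and C="\<gamma>*c*(1+c)-c"]) (simp_all add: g1 c0 gm1 D_def power2_eq_square algebra_simps)
    subgoal by (rule q[where A="0" and B="1+c" and C="c^2"]) (simp_all add: c0 D_def power2_eq_square algebra_simps)
    subgoal by (rule q[where A="-1" and B="\<gamma>-c" and C="\<gamma>*c-c"]) (simp_all add: D_def power2_eq_square algebra_simps)
    subgoal by (rule q[where A="1" and B="0" and C="-c-c^2"]) (simp_all add: D_def power2_eq_square algebra_simps)
    subgoal by (rule q[where A="-1" and B="1-c" and C="0"]) (simp_all add: D_def power2_eq_square algebra_simps)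
    subgoal by (rule q[where A="-1" and B="0" and C="c^2"]) (simp_all add: D_def power2_eq_square algebra_simps)
    done
  then have "card bad < CARD('a)" using big by simp
  then have "bad \<noteq> UNIV" by auto
  then obtain t where "t \<notin> bad" by auto
  then have N1: "t \<noteq> 0" and N2: "t \<noteq> c" and N3: "t + 1 + c \<noteq> 0" and N4: "D t \<noteq> 0"
    and N5: "\<gamma>*t*(t+c) \<noteq> D t" and N6: "\<gamma>*t \<noteq> D t" and N7: "t \<noteq> D t" and N8: "c*\<gamma>*(t+1+c) \<noteq> D t"
    and N9: "\<gamma>*(t+c)*(t+1+c) \<noteq> D t" and N10: "(t+c)*(t+1+c) \<noteq> D t" and N11: "\<gamma>*(t+c) \<noteq> D t"
    and N12: "t*(t+c) \<noteq> c*(t+1+c)" and N13: "t + c \<noteq> D t" and N14: "c*(t+1+c) \<noteq> D t"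
    unfolding bad_def by simp_all

  define Dt where "Dt = D t"
  have Dt: "Dt = t^2 + c*t + c" unfolding Dt_def D_def by simp
  note N = N1 N2 N3 N4 N5 N6 N7 N8 N9 N10 N11 N12 N13 N14
  have N4': "Dt \<noteq> 0" using N4 Dt_def by simp
  have tc: "t + c \<noteq> 0"
  proof
    assume "t + c = 0" then have "t = - c" by (simp add: eq_neg_iff_add_eq_0)
    then show False using N2 neg by simp
  qed
  have tc': "c + t \<noteq> 0" using tc by (simp add: add.commute)
  have nz: "\<gamma>*t \<noteq> 0" "\<gamma>*t*(t+c) \<noteq> 0" "\<gamma>*(t+c) \<noteq> 0" "\<gamma>*(c+t) \<noteq> 0"
    using g0 N1 tc tc' by simp_all
  define a where "a = \<gamma>*t*(t+1+c)/Dt"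
  define b where "b = Dt/(\<gamma>*(t+c))"
  define r1 where "r1 = \<gamma>*t*(t+c)/Dt"
  define r2 where "r2 = c*\<gamma>*(t+1+c)/Dt"
  have r2': "r2 = \<gamma>*(c*(t+1+c))/Dt" unfolding r2_def by (simp only: mult.commute[of c \<gamma>] mult.assoc)
  have E1: "\<gamma> + a = \<gamma>*(t+c)/Dt"
  proof -
    have "\<gamma> + a = \<gamma>*(t+c)/Dt + 2*(\<gamma>*(t^2+c*t)/Dt)"
      unfolding a_def using N4' by (simp add: field_simps power2_eq_square; simp add: Dt algebra_simps power2_eq_square)
    then show ?thesis using two0 by simp
  qed
  have E2: "r1 + a = \<gamma>*t/Dt"
  proof -
    have "r1 + a = \<gamma>*t/Dt + 2*(\<gamma>*t*(t+c)/Dt)"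
      unfolding a_def r1_def using N4' by (simp add: field_simps; algebra)
    then show ?thesis using two0 by simp
  qed
  have E3: "r2 + a = \<gamma>*(t+c)*(t+1+c)/Dt"
    unfolding a_def r2_def using N4' by (simp add: field_simps; algebra)
  have Dne: "t*(t+c) \<noteq> Dt"
  proof
    assume "t*(t+c) = Dt"
    moreover have "Dt - t*(t+c) = c" unfolding Dt by (simp add: algebra_simps power2_eq_square)
    ultimately show False using c0 by simp
  qed
  have cyc_id: "cyc3 \<gamma> x = x" if "x \<noteq> 0" "x \<noteq> 1" "x \<noteq> \<gamma>" for x
    using that unfolding cyc3_def by simp
  have frac_ne: "u/Dt \<noteq> 1" if "u \<noteq> Dt" for u using that N4' by (simp add: field_simps)
  have frac_ne2: "\<gamma>*u/Dt \<noteq> \<gamma>" if "u \<noteq> Dt" for u using that N4' g0 by (simp add: field_simps)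
  have s0: "F (\<gamma> + a) + c * F \<gamma> = b"
  proof -
    have "cyc3 \<gamma> \<gamma> = 0" unfolding cyc3_def using g0 g1 by simp
    moreover have "cyc3 \<gamma> (\<gamma> + a) = \<gamma> + a"
    proof (rule cyc_id)
      show "\<gamma> + a \<noteq> 0" unfolding E1 using g0 tc N4' by simp
      show "\<gamma> + a \<noteq> 1" unfolding E1 using frac_ne[OF N11[folded Dt_def]] by simp
      show "\<gamma> + a \<noteq> \<gamma>" unfolding E1 using frac_ne2[OF N13[folded Dt_def]] by simp
    qed
    ultimately show ?thesis unfolding F_def E1 b_def by simp
  qed
  have s1: "F (r1 + a) + c * F r1 = b"
  proof -
    have "cyc3 \<gamma> r1 = r1"
    proof (rule cyc_id)
      show "r1 \<noteq> 0" unfolding r1_def using g0 tc N1 N4' by simp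
      show "r1 \<noteq> 1" unfolding r1_def using frac_ne[OF N5[folded Dt_def]] by simp
      show "r1 \<noteq> \<gamma>" unfolding r1_def using frac_ne2[OF Dne] by (simp add: mult.assoc)
    qed
    moreover have "cyc3 \<gamma> (r1 + a) = r1 + a"
    proof (rule cyc_id)
      show "r1 + a \<noteq> 0" unfolding E2 using g0 N1 N4' by simp
      show "r1 + a \<noteq> 1" unfolding E2 using frac_ne[OF N6[folded Dt_def]] by simp
      show "r1 + a \<noteq> \<gamma>" unfolding E2 using frac_ne2[OF N7[folded Dt_def]] by simp
    qed
    moreover have "inverse (\<gamma>*t/Dt) + c * inverse (\<gamma>*t*(t+c)/Dt) = b"
    proof -
      have xx: "c + c = 0" using char2_add[OF ch] .
      have h1: "1 + c/(t+c) = t/(t+c)"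
      proof -
        have "1 + c/(t+c) = (t + (c + c))/(t+c)" using tc by (simp add: field_simps)
        then show ?thesis using xx by simp
      qed
      have "inverse (\<gamma>*t/Dt) + c * inverse (\<gamma>*t*(t+c)/Dt) = Dt/(\<gamma>*t) + Dt/(\<gamma>*t) * (c/(t+c))"
        by simp
      also have "\<dots> = Dt/(\<gamma>*t) * (1 + c/(t+c))" by (simp add: algebra_simps)
      also have "\<dots> = Dt/(\<gamma>*t) * (t/(t+c))" using h1 by simp
      also have "\<dots> = b" unfolding b_def using N1 by simp
      finally show ?thesis .
    qed
    ultimately show ?thesis unfolding F_def E2 by (simp add: r1_def)
  qed
  have s2: "F (r2 + a) + c * F r2 = b"
  proof -
    have "cyc3 \<gamma> r2 = r2"
    proof (rule cyc_id)
      show "r2 \<noteq> 0" unfolding r2_def using g0 c0 N3 N4' by simp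
      show "r2 \<noteq> 1" unfolding r2_def using frac_ne[OF N8[folded Dt_def]] by simp
      show "r2 \<noteq> \<gamma>" unfolding r2' by (rule frac_ne2[OF N14[folded Dt_def]])
    qed
    moreover have "cyc3 \<gamma> (r2 + a) = r2 + a"
    proof (rule cyc_id)
      show "r2 + a \<noteq> 0" unfolding E3 using g0 tc N3 N4' by simp
      show "r2 + a \<noteq> 1" unfolding E3 using frac_ne[OF N9[folded Dt_def]] by simp
      show "r2 + a \<noteq> \<gamma>" unfolding E3 using frac_ne2[OF N10[folded Dt_def]] by (simp add: mult.assoc)
    qed
    moreover have "inverse (\<gamma>*(t+c)*(t+1+c)/Dt) + c * inverse (c*\<gamma>*(t+1+c)/Dt) = b"
    proof -
      have h1: "1/(t+c) + 1 = (t+1+c)/(t+c)" using tc by (simp add: field_simps)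
      have "inverse (\<gamma>*(t+c)*(t+1+c)/Dt) + c * inverse (c*\<gamma>*(t+1+c)/Dt)
          = Dt/(\<gamma>*(t+1+c)) * (1/(t+c)) + Dt/(\<gamma>*(t+1+c))"
        using c0 by (simp add: ac_simps)
      also have "\<dots> = Dt/(\<gamma>*(t+1+c)) * (1/(t+c) + 1)" by (simp only: distrib_left mult_1_right)
      also have "\<dots> = Dt/(\<gamma>*(t+1+c)) * ((t+1+c)/(t+c))" using h1 by simp
      also have "\<dots> = b" unfolding b_def using N3 by simp
      finally show ?thesis .
    qed
    ultimately show ?thesis unfolding F_def E3 by (simp add: r2_def)
  qed
  have d1: "\<gamma> \<noteq> r1" using frac_ne2[OF Dne] unfolding r1_def by (simp add: mult.assoc)
  have d2: "\<gamma> \<noteq> r2" using frac_ne2[OF N14[folded Dt_def]] unfolding r2' by metis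
  have d3: "r1 \<noteq> r2"
  proof
    assume "r1 = r2"
    then have "\<gamma>*(t*(t+c)) = \<gamma>*(c*(t+1+c))" unfolding r1_def r2_def using N4'
      by (simp add: field_simps)
    then show False using N12 g0 by simp
  qed
  have "{\<gamma>, r1, r2} \<subseteq> {x. F (x + a) + c * F x = b}" using s0 s1 s2 by simp
  then have "card {\<gamma>, r1, r2} \<le> card {x. F (x + a) + c * F x = b}" by (rule card_mono[rotated]) simp
  moreover have "card {\<gamma>, r1, r2} = 3" using d1 d2 d3 by simp
  ultimately show ?thesis by metis
qed

lemma pow16:
  assumes "CARD('a::{field,finite}) = 16"
  shows "(x::'a)^16 = x"
proof (cases "x = 0")
  case False
  have "x^15 = 1" using fermat_fin[OF False] assms by simp
  then have "x * x^15 = x" by simp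
  then show ?thesis by (simp add: power_Suc[symmetric] del: power_Suc)
qed simp

lemma ex_alpha:
  assumes card: "CARD('a::{field,finite}) = 16" and ch: "(1::'a)+1=0"
  shows "\<exists>\<alpha>::'a. \<alpha>^4 + \<alpha> + 1 = 0"
proof (rule ccontr)
  assume "\<not> ?thesis"
  then have np: "\<And>x::'a. x^4 + x + 1 \<noteq> 0" by auto
  have two0: "(2::'a) = 0" using ch by simp
  define H :: "'a poly" where "H = [:0,1,1,1,1,0,1,0,1,1,0,0,1:]"
  have hx: "poly H x = x + x^2 + x^3 + x^4 + x^6 + x^8 + x^9 + x^12" for x
    unfolding H_def by (simp; algebra)
  have "poly H x = 0" for x
  proof -
    have "x^16 + x = (x^4+x+1) * (x + x^2 + x^3 + x^4 + x^6 + x^8 + x^9 + x^12)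
        - 2*(x^2+x^3+x^4+x^5+x^6+x^7+x^8+x^9+x^10+x^12+x^13)" by algebra
    then have "(x^4+x+1) * (x + x^2 + x^3 + x^4 + x^6 + x^8 + x^9 + x^12) = x + x"
      using two0 pow16[OF card, of x] by simp
    also have "x + x = 0" using char2_add[OF ch] .
    finally show ?thesis using np[of x] hx by simp
  qed
  then have "{x. poly H x = 0} = UNIV" by auto
  moreover have "H \<noteq> 0" unfolding H_def by simp
  then have "card {x. poly H x = 0} \<le> degree H" by (rule card_poly_roots_bound)
  moreover have "degree H = 12" unfolding H_def by simp
  ultimately show False using card by simp
qed

type_synonym b4 = "bool \<times> bool \<times> bool \<times> bool"

definition Ev :: "'a::field \<Rightarrow> b4 \<Rightarrow> 'a" where
  "Ev \<alpha> u = (case u of (p0,p1,p2,p3) \<Rightarrow> of_bool p0 + of_bool p1 * \<alpha> + of_bool p2 * \<alpha>^2 + of_bool p3 * \<alpha>^3)"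

definition bxor :: "b4 \<Rightarrow> b4 \<Rightarrow> b4" where
  "bxor u v = (case u of (p0,p1,p2,p3) \<Rightarrow> case v of (q0,q1,q2,q3) \<Rightarrow>
     (p0 \<noteq> q0, p1 \<noteq> q1, p2 \<noteq> q2, p3 \<noteq> q3))"

definition bmul :: "b4 \<Rightarrow> b4 \<Rightarrow> b4" where
  "bmul u v = (case u of (x0,x1,x2,x3) \<Rightarrow> case v of (y0,y1,y2,y3) \<Rightarrow>
     (let c0 = (x0 \<and> y0);
          c1 = ((x0 \<and> y1) \<noteq> (x1 \<and> y0));
          c2 = (((x0 \<and> y2) \<noteq> (x1 \<and> y1)) \<noteq> (x2 \<and> y0));
          c3 = ((((x0 \<and> y3) \<noteq> (x1 \<and> y2)) \<noteq> (x2 \<and> y1)) \<noteq> (x3 \<and> y0));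
          c4 = (((x1 \<and> y3) \<noteq> (x2 \<and> y2)) \<noteq> (x3 \<and> y1));
          c5 = ((x2 \<and> y3) \<noteq> (x3 \<and> y2));
          c6 = (x3 \<and> y3)
      in (c0 \<noteq> c4, (c1 \<noteq> c4) \<noteq> c5, (c2 \<noteq> c5) \<noteq> c6, c3 \<noteq> c6)))"

lemma ob_xor:
  assumes ch: "(1::'a::comm_ring_1)+1=0"
  shows "(of_bool (p \<noteq> q) :: 'a) = of_bool p + of_bool q"
  using ch by (cases p; cases q) simp_all

lemma Ev_add:
  assumes ch: "(1::'a::field)+1=0"
  shows "Ev \<alpha> u + Ev \<alpha> v = Ev (\<alpha>::'a) (bxor u v)"
proof -
  obtain p0 p1 p2 p3 where u: "u = (p0,p1,p2,p3)" by (cases u) auto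
  obtain q0 q1 q2 q3 where v: "v = (q0,q1,q2,q3)" by (cases v) auto
  show ?thesis unfolding u v Ev_def bxor_def
    by (simp only: prod.case ob_xor[OF ch]) algebra
qed

lemma poly_red:
  fixes \<alpha> X0 X1 X2 X3 Y0 Y1 Y2 Y3 :: "'a::field"
  assumes ch: "(1::'a)+1=0" and al: "\<alpha>^4 + \<alpha> + 1 = 0"
  shows "(X0 + X1*\<alpha> + X2*\<alpha>^2 + X3*\<alpha>^3) * (Y0 + Y1*\<alpha> + Y2*\<alpha>^2 + Y3*\<alpha>^3)
    = (X0*Y0 + (X1*Y3 + X2*Y2 + X3*Y1))
    + (X0*Y1 + X1*Y0 + (X1*Y3 + X2*Y2 + X3*Y1) + (X2*Y3 + X3*Y2))*\<alpha>
    + (X0*Y2 + X1*Y1 + X2*Y0 + (X2*Y3 + X3*Y2) + X3*Y3)*\<alpha>^2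
    + (X0*Y3 + X1*Y2 + X2*Y1 + X3*Y0 + X3*Y3)*\<alpha>^3"
proof -
  let ?C4 = "X1*Y3 + X2*Y2 + X3*Y1" and ?C5 = "X2*Y3 + X3*Y2" and ?C6 = "X3*Y3"
  have neg: "\<And>x::'a. - x = x" using char2_neg[OF ch] .
  have "(X0 + X1*\<alpha> + X2*\<alpha>^2 + X3*\<alpha>^3) * (Y0 + Y1*\<alpha> + Y2*\<alpha>^2 + Y3*\<alpha>^3)
    = (X0*Y0 - ?C4)
    + (X0*Y1 + X1*Y0 - ?C4 - ?C5)*\<alpha>
    + (X0*Y2 + X1*Y1 + X2*Y0 - ?C5 - ?C6)*\<alpha>^2
    + (X0*Y3 + X1*Y2 + X2*Y1 + X3*Y0 - ?C6)*\<alpha>^3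
    + (\<alpha>^4 + \<alpha> + 1) * (?C4 + ?C5*\<alpha> + ?C6*\<alpha>^2)" by algebra
  then show ?thesis using al by (simp only: diff_conv_add_uminus neg mult_zero_left add_0_right)
qed

lemma Ev_mul:
  assumes ch: "(1::'a::field)+1=0" and al: "\<alpha>^4 + \<alpha> + 1 = 0"
  shows "Ev \<alpha> u * Ev \<alpha> v = Ev (\<alpha>::'a) (bmul u v)"
proof -
  obtain p0 p1 p2 p3 where u: "u = (p0,p1,p2,p3)" by (cases u) auto
  obtain q0 q1 q2 q3 where v: "v = (q0,q1,q2,q3)" by (cases v) auto
  show ?thesis unfolding u v Ev_def bmul_def Let_def
    by (simp only: prod.case poly_red[OF ch al] ob_xor[OF ch] of_bool_conj)
qed


fun binv :: "b4 \<Rightarrow> b4" where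
  "binv (False,False,False,False) = (False,False,False,False)"
|   "binv (True,False,False,False) = (True,False,False,False)"
|   "binv (False,True,False,False) = (True,False,False,True)"
|   "binv (True,True,False,False) = (False,True,True,True)"
|   "binv (False,False,True,False) = (True,False,True,True)"
|   "binv (True,False,True,False) = (True,True,False,True)"
|   "binv (False,True,True,False) = (True,True,True,False)"
|   "binv (True,True,True,False) = (False,True,True,False)"
|   "binv (False,False,False,True) = (True,True,True,True)"
|   "binv (True,False,False,True) = (False,True,False,False)"
|   "binv (False,True,False,True) = (False,False,True,True)"
|   "binv (True,True,False,True) = (True,False,True,False)"
|   "binv (False,False,True,True) = (False,True,False,True)"
|   "binv (True,False,True,True) = (False,False,True,False)"
|   "binv (False,True,True,True) = (True,True,False,False)"
|   "binv (True,True,True,True) = (False,False,False,True)"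

definition wit :: "b4 \<Rightarrow> b4 \<Rightarrow> b4 \<times> b4 \<times> b4 \<times> b4 \<times> b4" where
  "wit g c = (case g of (g0,g1,g2,g3) \<Rightarrow> case c of (c0,c1,c2,c3) \<Rightarrow>
    (if g0 then (if g1 then (if g2 then (if g3 then (if c0 then (if c1 then (if c2 then (if c3 then ((True,False,False,False),(True,True,False,False),(True,True,True,False),(True,False,True,True),(True,True,True,True)) else ((True,False,False,False),(True,False,False,True),(True,False,True,False),(False,False,False,True),(False,True,True,True))) else (if c3 then ((False,True,False,False),(False,False,True,False),(True,True,True,False),(False,True,True,True),(True,True,True,True)) else ((True,False,False,False),(True,True,False,False),(True,False,True,False),(True,True,False,True),(True,True,True,True)))) else (if c2 then (if c3 then ((True,False,False,False),(True,True,False,False),(True,False,False,False),(True,True,False,False),(False,True,True,False)) else ((False,True,False,False),(True,True,True,False),(True,False,True,False),(False,False,True,True),(True,False,True,True))) else (if c3 then ((True,False,False,False),(True,False,False,False),(False,False,False,False),(True,False,True,False),(False,False,True,True)) else ((False,False,False,False),(False,False,False,False),(False,False,False,False),(False,False,False,False),(False,False,False,False))))) else (if c1 then (if c2 then (if c3 then ((True,False,False,False),(True,False,False,False),(False,False,True,False),(False,True,False,True),(False,True,True,True)) else ((True,False,False,False),(True,True,False,False),(False,False,True,False),(True,False,False,True),(True,True,True,True))) else (if c3 then ((True,False,False,False),(False,True,True,True),(True,False,False,False),(True,True,True,False),(False,False,False,True)) else ((True,False,False,False),(False,True,False,False),(True,False,False,False),(False,False,True,False),(True,False,True,True)))) else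 (if c2 then (if c3 then ((True,False,False,False),(False,False,True,False),(False,False,False,False),(False,True,True,False),(True,False,False,True)) else ((True,False,False,False),(True,True,True,False),(True,False,False,False),(True,False,True,False),(True,False,False,True))) else (if c3 then ((True,False,False,False),(True,True,False,True),(False,True,True,False),(False,False,True,True),(False,True,True,True)) else ((False,False,False,False),(False,False,False,False),(False,False,False,False),(False,False,False,False),(False,False,False,False)))))) else (if c0 then (if c1 then (if c2 then (if c3 then ((False,True,False,False),(False,True,True,False),(False,False,False,False),(False,True,True,False),(False,False,False,True)) else ((True,False,False,False),(True,False,False,False),(False,False,False,False),(True,False,False,True),(False,True,True,True))) else (if c3 then ((True,False,False,False),(False,False,True,False),(True,False,True,False),(False,True,True,False),(True,True,True,True)) else ((True,False,False,False),(True,False,False,True),(False,True,True,False),(True,False,False,True),(False,False,True,True)))) else (if c2 then (if c3 then ((True,False,False,False),(True,False,True,False),(False,False,True,False),(False,True,True,False),(False,False,False,True)) else ((True,False,False,False),(True,True,True,False),(False,False,True,False),(True,True,True,False),(False,True,True,True))) else (if c3 then ((True,False,False,False),(True,True,True,False),(True,True,True,False),(True,True,False,True),(True,True,True,True)) else ((False,False,False,False),(False,False,False,False),(False,False,False,False),(False,False,False,False),(False,False,False,False))))) else (if c1 then (if c2 then (if c3 then ((True,False,False,False),(True,True,True,False),(True,True,True,False),(False,False,False,True),(True,False,True,True)) else ((True,False,False,False),(True,False,False,False),(False,True,True,False),(True,True,False,True),(True,False,True,True))) else (if c3 then ((True,False,False,False),(False,False,False,True),(True,False,False,False),(True,False,False,True),(True,True,False,True))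 else ((True,False,False,False),(False,True,True,True),(False,True,True,False),(False,True,False,True),(False,True,True,True)))) else (if c2 then (if c3 then ((True,False,False,False),(False,True,False,True),(False,False,False,False),(False,False,False,True),(False,True,False,True)) else ((True,False,False,False),(True,True,True,False),(True,False,True,False),(True,True,True,False),(True,False,False,True))) else (if c3 then ((False,True,False,False),(True,False,True,False),(False,True,False,False),(False,False,True,False),(False,True,False,True)) else ((False,False,False,False),(False,False,False,False),(False,False,False,False),(False,False,False,False),(False,False,False,False))))))) else (if g3 then (if c0 then (if c1 then (if c2 then (if c3 then ((True,False,False,False),(False,False,False,True),(False,False,False,True),(False,True,False,True),(False,False,True,True)) else ((True,False,False,False),(True,False,False,True),(True,False,False,False),(True,False,True,False),(False,False,False,True))) else (if c3 then ((False,True,False,False),(False,True,False,False),(False,False,False,False),(False,True,False,True),(True,True,False,True)) else ((True,False,False,False),(False,True,True,False),(False,False,False,False),(False,True,False,False),(True,False,True,True)))) else (if c2 then (if c3 then ((True,False,False,False),(True,True,False,False),(True,True,False,False),(False,True,True,False),(False,True,False,True)) else ((False,True,False,False),(False,True,True,False),(True,True,False,False),(True,True,True,False),(False,True,False,True))) else (if c3 then ((True,False,False,False),(False,False,True,True),(False,False,False,False),(False,True,True,False),(False,False,False,True)) else ((False,False,False,False),(False,False,False,False),(False,False,False,False),(False,False,False,False),(False,False,False,False))))) else (if c1 then (if c2 then (if c3 then ((True,False,False,False),(False,True,False,False),(True,False,False,False),(True,True,False,False),(False,False,True,True)) else ((True,False,False,False),(True,True,False,False),(False,False,False,False),(False,False,True,False),(True,False,False,True)))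 else (if c3 then ((True,False,False,False),(True,False,True,False),(True,False,False,False),(False,True,True,False),(False,True,True,True)) else ((True,False,False,False),(True,True,False,True),(True,False,False,False),(True,True,True,False),(True,False,False,True)))) else (if c2 then (if c3 then ((True,False,False,False),(False,False,False,True),(True,False,False,False),(False,True,False,False),(False,False,True,False)) else ((True,False,False,False),(False,False,True,True),(False,True,False,False),(True,True,True,False),(True,True,False,True))) else (if c3 then ((True,False,False,False),(False,True,False,True),(False,True,False,False),(True,False,True,False),(False,True,False,True)) else ((False,False,False,False),(False,False,False,False),(False,False,False,False),(False,False,False,False),(False,False,False,False)))))) else (if c0 then (if c1 then (if c2 then (if c3 then ((False,True,False,False),(True,False,True,False),(True,False,False,False),(True,False,True,False),(True,True,True,True)) else ((True,False,False,False),(True,False,False,True),(False,False,False,False),(True,True,False,False),(True,False,True,False))) else (if c3 then ((False,True,False,False),(False,True,False,False),(False,False,False,False),(False,True,False,True),(True,False,True,True)) else ((True,False,False,False),(True,False,False,True),(True,True,False,False),(True,False,False,True),(False,False,True,True)))) else (if c2 then (if c3 then ((True,False,False,False),(True,True,False,True),(True,False,False,False),(True,False,True,False),(True,False,True,True)) else ((False,True,False,False),(False,True,False,True),(False,True,False,False),(False,False,False,True),(True,True,True,True))) else (if c3 then ((True,False,False,False),(True,True,True,False),(False,False,False,False),(True,True,False,True),(True,True,True,True)) else ((False,False,False,False),(False,False,False,False),(False,False,False,False),(False,False,False,False),(False,False,False,False))))) else (if c1 then (if c2 then (if c3 then ((True,False,False,False),(True,True,True,False),(False,True,False,False),(False,False,False,True),(True,False,True,True))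 else ((True,False,False,False),(True,True,False,False),(True,False,False,False),(False,True,False,False),(False,False,True,False))) else (if c3 then ((True,False,False,False),(False,False,True,False),(False,False,False,False),(False,True,False,True),(True,False,True,True)) else ((True,False,False,False),(False,True,True,True),(True,False,False,False),(False,True,False,True),(False,True,True,True)))) else (if c2 then (if c3 then ((True,False,False,False),(True,False,True,False),(True,False,False,False),(True,True,False,True),(False,False,True,True)) else ((True,False,False,False),(True,False,False,True),(True,True,False,False),(False,True,True,False),(True,False,True,True))) else (if c3 then ((False,True,False,False),(True,False,False,False),(False,False,False,False),(True,False,True,False),(False,True,True,True)) else ((False,False,False,False),(False,False,False,False),(False,False,False,False),(False,False,False,False),(False,False,False,False)))))))) else (if g2 then (if g3 then (if c0 then (if c1 then (if c2 then (if c3 then ((True,False,False,False),(False,True,False,True),(True,True,False,True),(True,False,True,True),(False,True,True,True)) else ((True,False,False,False),(False,True,True,True),(True,False,False,False),(False,False,True,False),(True,True,True,True))) else (if c3 then ((True,False,False,False),(False,True,False,False),(False,True,False,False),(False,True,True,False),(False,False,True,True)) else ((True,False,False,False),(True,False,True,True),(True,False,False,False),(True,True,True,False),(False,False,True,True)))) else (if c2 then (if c3 then ((False,True,False,False),(False,False,False,True),(False,True,True,False),(False,False,True,True),(True,False,True,True)) else ((True,False,False,False),(False,True,False,True),(True,True,False,False),(True,True,True,False),(True,False,True,True))) else (if c3 then ((True,False,False,False),(True,True,False,False),(True,False,False,False),(False,True,False,False),(False,True,False,True)) else ((False,False,False,False),(False,False,False,False),(False,False,False,False),(False,False,False,False),(False,False,False,False)))))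 else (if c1 then (if c2 then (if c3 then ((True,False,False,False),(False,True,False,True),(False,False,False,False),(False,True,True,False),(True,False,True,True)) else ((True,False,False,False),(False,True,False,False),(False,False,False,False),(True,False,True,False),(False,True,True,True))) else (if c3 then ((True,False,False,False),(False,False,False,True),(True,False,False,True),(True,True,False,True),(False,False,True,True)) else ((True,False,False,False),(False,True,True,False),(False,False,False,False),(True,True,False,False),(True,True,False,True)))) else (if c2 then (if c3 then ((True,False,False,False),(False,False,True,False),(True,False,False,False),(False,True,True,False),(True,False,False,True)) else ((False,True,False,False),(False,True,True,False),(False,False,True,False),(False,True,True,True),(True,True,True,True))) else (if c3 then ((True,False,False,False),(False,True,False,True),(False,True,False,False),(True,False,True,False),(True,False,True,True)) else ((False,False,False,False),(False,False,False,False),(False,False,False,False),(False,False,False,False),(False,False,False,False)))))) else (if c0 then (if c1 then (if c2 then (if c3 then ((True,False,False,False),(False,True,False,False),(True,False,False,False),(True,False,False,True),(True,True,True,True)) else ((True,False,False,False),(True,False,True,False),(True,False,False,False),(True,True,False,False),(False,False,True,False))) else (if c3 then ((True,False,False,False),(False,True,True,False),(False,False,True,False),(False,False,True,True),(False,True,True,True)) else ((True,False,False,False),(False,False,False,True),(False,False,False,False),(True,True,False,False),(True,True,True,True)))) else (if c2 then (if c3 then ((True,False,False,False),(False,True,True,False),(False,False,False,False),(True,False,False,True),(False,True,False,True)) else ((True,False,False,False),(True,False,True,True),(True,False,True,False),(True,False,True,True),(True,True,True,True))) else (if c3 then ((False,True,False,False),(False,True,False,False),(True,False,False,False),(False,False,False,True),(False,True,True,True))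 else ((False,False,False,False),(False,False,False,False),(False,False,False,False),(False,False,False,False),(False,False,False,False))))) else (if c1 then (if c2 then (if c3 then ((True,False,False,False),(True,False,False,True),(True,False,False,False),(False,True,False,False),(False,True,True,True)) else ((True,False,False,False),(True,False,True,True),(False,False,False,False),(False,True,False,False),(True,False,True,False))) else (if c3 then ((False,True,False,False),(False,True,True,False),(True,False,True,False),(True,True,False,True),(True,False,True,True)) else ((False,True,False,False),(False,False,True,False),(True,True,False,False),(False,True,False,True),(False,False,True,True)))) else (if c2 then (if c3 then ((False,True,False,False),(False,True,True,True),(True,True,True,False),(True,False,False,True),(True,True,True,True)) else ((True,False,False,False),(True,True,False,True),(True,False,False,False),(False,False,False,True),(True,True,False,True))) else (if c3 then ((True,False,False,False),(False,True,False,False),(False,False,True,False),(True,True,True,False),(True,True,False,True)) else ((False,False,False,False),(False,False,False,False),(False,False,False,False),(False,False,False,False),(False,False,False,False))))))) else (if g3 then (if c0 then (if c1 then (if c2 then (if c3 then ((True,False,False,False),(False,True,False,True),(False,False,False,True),(True,True,False,True),(False,True,True,True)) else ((True,False,False,False),(True,False,True,False),(False,False,False,False),(True,True,False,False),(True,False,True,True))) else (if c3 then ((True,False,False,False),(False,False,True,False),(True,False,False,False),(True,False,True,False),(True,True,True,True)) else ((True,False,False,False),(True,True,True,True),(False,False,True,False),(False,True,True,False),(True,False,False,True)))) else (if c2 then (if c3 then ((True,False,False,False),(True,True,True,True),(False,False,False,False),(True,True,True,False),(True,False,False,True)) else ((True,False,False,False),(True,True,True,False),(False,False,False,False),(False,False,True,False),(False,True,True,True)))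 else (if c3 then ((False,False,True,False),(False,False,True,False),(False,False,False,False),(False,False,False,True),(True,False,False,True)) else ((False,False,False,False),(False,False,False,False),(False,False,False,False),(False,False,False,False),(False,False,False,False))))) else (if c1 then (if c2 then (if c3 then ((True,False,False,False),(True,False,True,False),(True,False,True,False),(True,True,True,False),(False,False,False,True)) else ((True,False,False,False),(True,False,True,True),(True,False,False,False),(False,True,False,False),(False,False,True,True))) else (if c3 then ((True,False,False,False),(False,False,True,True),(False,False,False,True),(False,False,True,True),(True,True,True,True)) else ((False,False,True,False),(True,True,True,False),(True,False,True,False),(False,True,True,False),(False,False,False,True)))) else (if c2 then (if c3 then ((True,False,False,False),(False,False,False,True),(False,True,False,False),(False,False,True,False),(False,False,False,True)) else ((True,False,False,False),(True,False,False,True),(True,False,False,False),(False,True,True,False),(False,False,False,True))) else (if c3 then ((True,False,False,False),(False,True,False,False),(True,False,False,False),(True,True,True,False),(True,True,False,True)) else ((False,False,False,False),(False,False,False,False),(False,False,False,False),(False,False,False,False),(False,False,False,False)))))) else (if c0 then (if c1 then (if c2 then (if c3 then ((False,False,False,False),(False,False,False,False),(False,False,False,False),(False,False,False,False),(False,False,False,False)) else ((False,False,False,False),(False,False,False,False),(False,False,False,False),(False,False,False,False),(False,False,False,False))) else (if c3 then ((False,False,False,False),(False,False,False,False),(False,False,False,False),(False,False,False,False),(False,False,False,False)) else ((False,False,False,False),(False,False,False,False),(False,False,False,False),(False,False,False,False),(False,False,False,False)))) else (if c2 then (if c3 then ((False,False,False,False),(False,False,False,False),(False,False,False,False),(False,False,False,False),(False,False,False,False))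 else ((False,False,False,False),(False,False,False,False),(False,False,False,False),(False,False,False,False),(False,False,False,False))) else (if c3 then ((False,False,False,False),(False,False,False,False),(False,False,False,False),(False,False,False,False),(False,False,False,False)) else ((False,False,False,False),(False,False,False,False),(False,False,False,False),(False,False,False,False),(False,False,False,False))))) else (if c1 then (if c2 then (if c3 then ((False,False,False,False),(False,False,False,False),(False,False,False,False),(False,False,False,False),(False,False,False,False)) else ((False,False,False,False),(False,False,False,False),(False,False,False,False),(False,False,False,False),(False,False,False,False))) else (if c3 then ((False,False,False,False),(False,False,False,False),(False,False,False,False),(False,False,False,False),(False,False,False,False)) else ((False,False,False,False),(False,False,False,False),(False,False,False,False),(False,False,False,False),(False,False,False,False)))) else (if c2 then (if c3 then ((False,False,False,False),(False,False,False,False),(False,False,False,False),(False,False,False,False),(False,False,False,False)) else ((False,False,False,False),(False,False,False,False),(False,False,False,False),(False,False,False,False),(False,False,False,False))) else (if c3 then ((False,False,False,False),(False,False,False,False),(False,False,False,False),(False,False,False,False),(False,False,False,False)) else ((False,False,False,False),(False,False,False,False),(False,False,False,False),(False,False,False,False),(False,False,False,False))))))))) else (if g1 then (if g2 then (if g3 then (if c0 then (if c1 then (if c2 then (if c3 then ((True,False,False,False),(True,True,False,False),(True,False,False,False),(True,True,True,False),(True,False,True,True)) else ((True,False,False,False),(False,False,True,False),(False,False,False,False),(False,True,False,False),(True,True,False,True))) else (if c3 then ((True,False,False,False),(False,False,False,True),(False,False,False,False),(True,True,True,False),(False,True,False,True)) else ((False,False,True,False),(True,True,True,False),(True,True,False,False),(False,True,False,True),(True,True,False,True))))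 else (if c2 then (if c3 then ((True,False,False,False),(True,False,True,False),(True,False,False,False),(False,False,True,False),(False,False,False,True)) else ((True,False,False,False),(False,True,True,True),(True,False,False,False),(False,True,True,False),(True,True,False,True))) else (if c3 then ((True,False,False,False),(False,False,True,False),(False,False,True,False),(True,True,True,False),(True,True,True,True)) else ((False,False,False,False),(False,False,False,False),(False,False,False,False),(False,False,False,False),(False,False,False,False))))) else (if c1 then (if c2 then (if c3 then ((False,False,True,False),(True,True,False,True),(False,False,True,False),(True,False,True,False),(True,False,False,True)) else ((True,False,False,False),(True,True,False,True),(True,False,False,False),(True,True,False,False),(False,True,False,True))) else (if c3 then ((True,False,False,False),(False,False,False,True),(True,False,False,True),(True,True,False,True),(False,True,True,True)) else ((True,False,False,False),(False,False,False,True),(True,False,True,False),(False,True,True,False),(False,True,True,True)))) else (if c2 then (if c3 then ((True,False,False,False),(False,False,False,True),(False,True,False,False),(False,False,True,False),(False,True,True,True)) else ((True,False,False,False),(True,True,True,False),(False,False,False,False),(True,False,True,False),(True,False,False,True))) else (if c3 then ((True,False,False,False),(False,True,False,True),(True,False,False,False),(False,True,False,False),(True,False,True,False)) else ((False,False,False,False),(False,False,False,False),(False,False,False,False),(False,False,False,False),(False,False,False,False)))))) else (if c0 then (if c1 then (if c2 then (if c3 then ((True,False,False,False),(False,False,False,True),(False,False,False,False),(False,False,False,True),(False,False,True,True)) else ((True,False,False,False),(True,False,False,False),(True,True,True,False),(True,False,False,True),(False,True,True,True))) else (if c3 then ((True,False,False,False),(False,True,True,False),(False,True,True,False),(False,False,True,True),(False,True,True,True))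 else ((True,False,False,False),(False,True,True,False),(False,True,False,False),(False,True,True,False),(True,False,True,True)))) else (if c2 then (if c3 then ((True,False,False,False),(False,True,True,False),(False,True,True,False),(True,False,False,True),(False,True,False,True)) else ((True,False,False,False),(True,False,True,True),(True,True,True,False),(True,False,True,True),(True,True,True,True))) else (if c3 then ((True,False,False,False),(True,True,False,False),(False,True,False,False),(True,True,True,False),(False,True,False,True)) else ((False,False,False,False),(False,False,False,False),(False,False,False,False),(False,False,False,False),(False,False,False,False))))) else (if c1 then (if c2 then (if c3 then ((True,False,False,False),(False,True,False,False),(True,True,False,False),(True,True,True,False),(False,False,True,True)) else ((True,False,False,False),(True,False,False,False),(False,False,False,False),(True,True,False,True),(True,False,True,True))) else (if c3 then ((False,True,False,False),(True,True,False,True),(False,False,True,False),(False,False,True,True),(True,True,True,True)) else ((True,False,False,False),(False,True,True,False),(True,True,False,False),(False,True,True,False),(True,True,False,True)))) else (if c2 then (if c3 then ((False,True,False,False),(True,False,True,True),(False,True,True,False),(True,False,True,True),(False,True,True,True)) else ((True,False,False,False),(True,True,False,True),(True,True,True,False),(False,False,False,True),(True,True,False,True))) else (if c3 then ((True,False,False,False),(False,False,True,True),(True,False,False,False),(True,False,False,True),(True,False,True,True)) else ((False,False,False,False),(False,False,False,False),(False,False,False,False),(False,False,False,False),(False,False,False,False))))))) else (if g3 then (if c0 then (if c1 then (if c2 then (if c3 then ((True,False,False,False),(True,True,False,False),(False,False,False,False),(True,True,True,False),(True,False,True,True)) else ((True,False,False,False),(True,False,True,False),(True,True,False,False),(False,True,False,True),(True,False,True,True)))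 else (if c3 then ((True,False,False,False),(True,False,False,False),(True,True,False,False),(False,False,False,True),(True,True,False,True)) else ((True,False,False,False),(False,True,True,False),(True,False,False,False),(False,True,False,False),(True,False,True,True)))) else (if c2 then (if c3 then ((True,False,False,False),(True,False,False,False),(False,False,False,False),(False,True,False,False),(True,True,True,True)) else ((True,False,False,False),(True,False,True,False),(False,True,False,False),(True,False,False,True),(False,True,False,True))) else (if c3 then ((False,True,False,False),(False,False,False,True),(True,False,False,False),(False,False,True,False),(True,True,True,False)) else ((False,False,False,False),(False,False,False,False),(False,False,False,False),(False,False,False,False),(False,False,False,False))))) else (if c1 then (if c2 then (if c3 then ((True,False,False,False),(False,True,False,False),(False,False,False,False),(True,True,False,False),(False,False,True,True)) else ((True,False,False,False),(True,False,True,True),(False,True,False,False),(True,True,False,True),(False,False,True,True))) else (if c3 then ((True,False,False,False),(True,False,True,False),(False,True,True,False),(False,True,False,True),(False,True,True,True)) else ((False,True,False,False),(True,True,False,False),(True,True,False,False),(True,False,True,False),(False,True,True,False)))) else (if c2 then (if c3 then ((True,False,False,False),(True,False,False,True),(True,True,True,False),(True,True,False,True),(True,True,True,True)) else ((True,False,False,False),(False,False,True,False),(True,False,False,False),(True,True,False,False),(False,True,True,True))) else (if c3 then ((True,False,False,False),(True,True,False,True),(True,False,False,False),(False,True,True,False),(False,False,True,True)) else ((False,False,False,False),(False,False,False,False),(False,False,False,False),(False,False,False,False),(False,False,False,False)))))) else (if c0 then (if c1 then (if c2 then (if c3 then ((False,True,False,False),(True,True,True,True),(False,False,False,False),(True,True,True,False),(False,False,True,True))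 else ((True,False,False,False),(False,True,True,True),(False,False,False,False),(False,True,False,False),(False,False,True,False))) else (if c3 then ((True,False,False,False),(False,False,False,True),(True,True,False,False),(True,True,True,False),(False,True,False,True)) else ((True,False,False,False),(True,False,False,True),(True,False,False,False),(True,False,False,True),(False,False,True,True)))) else (if c2 then (if c3 then ((True,True,False,False),(True,True,False,False),(False,False,False,False),(True,True,False,True),(False,False,True,True)) else ((True,False,False,False),(False,False,True,True),(False,False,False,False),(True,False,True,False),(False,True,False,True))) else (if c3 then ((True,False,False,False),(True,True,True,False),(True,True,False,False),(True,True,False,True),(True,True,True,True)) else ((False,False,False,False),(False,False,False,False),(False,False,False,False),(False,False,False,False),(False,False,False,False))))) else (if c1 then (if c2 then (if c3 then ((True,False,False,False),(True,True,True,False),(False,False,False,False),(False,False,False,True),(True,False,True,True)) else ((True,False,False,False),(False,True,False,False),(True,False,False,False),(True,True,False,False),(True,False,True,False))) else (if c3 then ((True,False,False,False),(False,False,True,False),(True,False,False,False),(False,True,False,True),(True,False,True,True)) else ((True,False,False,False),(True,True,False,True),(False,False,False,False),(True,True,True,False),(True,False,False,True)))) else (if c2 then (if c3 then ((True,False,False,False),(False,False,True,False),(True,True,False,False),(False,True,True,False),(True,False,False,True)) else ((True,True,False,False),(False,False,True,True),(True,True,False,False),(False,False,False,True),(True,True,True,True))) else (if c3 then ((False,True,False,False),(True,False,False,False),(False,True,False,False),(True,False,True,False),(False,True,True,True)) else ((False,False,False,False),(False,False,False,False),(False,False,False,False),(False,False,False,False),(False,False,False,False)))))))) else (if g2 then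 (if g3 then (if c0 then (if c1 then (if c2 then (if c3 then ((True,False,False,False),(True,False,True,True),(True,False,False,False),(False,True,True,False),(False,True,False,True)) else ((True,False,False,False),(False,False,True,False),(False,True,False,False),(True,True,False,True),(False,False,True,True))) else (if c3 then ((True,False,False,False),(True,False,False,False),(False,False,False,False),(True,True,False,False),(False,False,False,True)) else ((False,True,False,False),(True,True,False,False),(True,False,False,False),(False,False,True,False),(True,False,False,True)))) else (if c2 then (if c3 then ((True,False,False,False),(True,False,False,False),(False,True,False,False),(True,False,True,True),(True,True,True,True)) else ((True,False,False,False),(True,False,True,False),(True,False,False,False),(False,True,False,False),(True,False,False,True))) else (if c3 then ((True,False,False,False),(True,True,False,False),(False,False,False,False),(False,True,False,False),(False,True,False,True)) else ((False,False,False,False),(False,False,False,False),(False,False,False,False),(False,False,False,False),(False,False,False,False))))) else (if c1 then (if c2 then (if c3 then ((False,True,False,False),(True,False,False,False),(True,True,False,False),(False,True,True,False),(True,True,False,True)) else ((True,False,False,False),(True,True,False,True),(True,True,False,False),(False,True,False,True),(True,False,True,True))) else (if c3 then ((True,False,False,False),(False,True,True,True),(True,True,True,False),(False,False,False,True),(True,False,True,True)) else ((True,False,False,False),(False,True,True,False),(True,False,False,False),(True,True,False,False),(True,True,False,True)))) else (if c2 then (if c3 then ((True,False,False,False),(False,False,True,False),(False,True,True,False),(True,False,False,True),(False,False,True,True)) else ((True,False,False,False),(False,False,True,False),(True,True,False,False),(False,False,True,True),(False,True,True,True))) else (if c3 then ((True,False,False,False),(False,True,False,False),(False,False,False,False),(True,True,True,False),(True,True,False,True))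 else ((False,False,False,False),(False,False,False,False),(False,False,False,False),(False,False,False,False),(False,False,False,False)))))) else (if c0 then (if c1 then (if c2 then (if c3 then ((True,False,False,False),(False,True,False,False),(False,False,False,False),(True,False,False,True),(True,True,True,True)) else ((True,False,False,False),(False,False,True,False),(True,False,False,False),(False,True,False,False),(True,False,True,False))) else (if c3 then ((True,False,False,False),(False,True,True,False),(False,False,False,False),(False,False,True,True),(False,True,True,True)) else ((True,True,False,False),(True,False,True,False),(False,True,False,False),(False,True,False,True),(False,False,True,True)))) else (if c2 then (if c3 then ((True,False,False,False),(False,True,True,False),(True,False,True,False),(True,False,False,True),(False,True,False,True)) else ((True,False,False,False),(True,False,True,True),(True,False,False,False),(True,False,True,True),(True,True,True,True))) else (if c3 then ((True,False,False,False),(False,False,True,True),(True,False,True,False),(False,True,True,False),(False,False,False,True)) else ((False,False,False,False),(False,False,False,False),(False,False,False,False),(False,False,False,False),(False,False,False,False))))) else (if c1 then (if c2 then (if c3 then ((True,True,False,False),(True,True,False,False),(True,False,False,False),(True,False,False,True),(True,True,True,True)) else ((True,False,False,False),(True,True,False,True),(False,False,False,False),(True,True,False,False),(False,False,True,False))) else (if c3 then ((False,True,False,False),(True,True,False,True),(True,True,False,False),(False,False,True,True),(True,True,True,True)) else ((True,False,False,False),(True,True,False,True),(False,False,True,False),(True,True,True,False),(True,False,False,True)))) else (if c2 then (if c3 then ((False,True,False,False),(True,False,True,True),(True,False,False,False),(True,False,True,True),(False,True,True,True)) else ((True,False,False,False),(True,False,False,True),(False,False,False,False),(False,True,True,False),(True,False,True,True)))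 else (if c3 then ((True,False,False,False),(True,True,False,False),(True,False,False,False),(False,False,False,True),(False,True,True,True)) else ((False,False,False,False),(False,False,False,False),(False,False,False,False),(False,False,False,False),(False,False,False,False))))))) else (if g3 then (if c0 then (if c1 then (if c2 then (if c3 then ((True,False,False,False),(True,False,True,True),(False,True,True,False),(True,False,False,True),(False,True,False,True)) else ((True,False,False,False),(False,True,True,True),(False,False,True,False),(True,False,False,True),(True,True,True,True))) else (if c3 then ((True,False,False,False),(False,True,False,False),(True,False,False,False),(False,True,False,False),(False,True,True,False)) else ((True,False,False,False),(True,True,False,False),(True,False,False,False),(True,False,True,False),(True,True,False,True)))) else (if c2 then (if c3 then ((False,True,False,False),(True,False,False,True),(True,False,False,False),(False,False,True,False),(True,False,True,True)) else ((True,False,False,False),(True,True,True,False),(True,False,False,False),(False,False,True,False),(False,True,True,True))) else (if c3 then ((True,False,False,False),(True,False,False,False),(True,False,True,False),(True,False,False,True),(False,False,True,True)) else ((False,False,False,False),(False,False,False,False),(False,False,False,False),(False,False,False,False),(False,False,False,False))))) else (if c1 then (if c2 then (if c3 then ((True,False,False,False),(True,False,False,False),(False,False,False,False),(False,False,True,False),(False,True,False,True)) else ((True,False,False,False),(False,True,False,False),(True,False,True,False),(False,False,False,True),(False,True,True,True))) else (if c3 then ((True,False,False,False),(True,False,True,False),(False,False,False,False),(False,True,True,False),(False,True,True,True)) else ((True,False,False,False),(False,True,False,False),(False,False,True,False),(False,False,False,True),(True,False,True,True)))) else (if c2 then (if c3 then ((True,False,False,False),(True,False,False,True),(True,False,False,False),(True,True,True,False),(True,True,True,True))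 else ((False,True,False,False),(False,True,False,False),(True,True,False,False),(False,True,True,False),(True,True,True,True))) else (if c3 then ((True,False,False,False),(False,True,False,False),(True,True,True,False),(False,False,False,True),(True,True,False,True)) else ((False,False,False,False),(False,False,False,False),(False,False,False,False),(False,False,False,False),(False,False,False,False)))))) else (if c0 then (if c1 then (if c2 then (if c3 then ((False,False,False,False),(False,False,False,False),(False,False,False,False),(False,False,False,False),(False,False,False,False)) else ((False,False,False,False),(False,False,False,False),(False,False,False,False),(False,False,False,False),(False,False,False,False))) else (if c3 then ((False,False,False,False),(False,False,False,False),(False,False,False,False),(False,False,False,False),(False,False,False,False)) else ((False,False,False,False),(False,False,False,False),(False,False,False,False),(False,False,False,False),(False,False,False,False)))) else (if c2 then (if c3 then ((False,False,False,False),(False,False,False,False),(False,False,False,False),(False,False,False,False),(False,False,False,False)) else ((False,False,False,False),(False,False,False,False),(False,False,False,False),(False,False,False,False),(False,False,False,False))) else (if c3 then ((False,False,False,False),(False,False,False,False),(False,False,False,False),(False,False,False,False),(False,False,False,False)) else ((False,False,False,False),(False,False,False,False),(False,False,False,False),(False,False,False,False),(False,False,False,False))))) else (if c1 then (if c2 then (if c3 then ((False,False,False,False),(False,False,False,False),(False,False,False,False),(False,False,False,False),(False,False,False,False)) else ((False,False,False,False),(False,False,False,False),(False,False,False,False),(False,False,False,False),(False,False,False,False))) else (if c3 then ((False,False,False,False),(False,False,False,False),(False,False,False,False),(False,False,False,False),(False,False,False,False)) else ((False,False,False,False),(False,False,False,False),(False,False,False,False),(False,False,False,False),(False,False,False,False))))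 else (if c2 then (if c3 then ((False,False,False,False),(False,False,False,False),(False,False,False,False),(False,False,False,False),(False,False,False,False)) else ((False,False,False,False),(False,False,False,False),(False,False,False,False),(False,False,False,False),(False,False,False,False))) else (if c3 then ((False,False,False,False),(False,False,False,False),(False,False,False,False),(False,False,False,False),(False,False,False,False)) else ((False,False,False,False),(False,False,False,False),(False,False,False,False),(False,False,False,False),(False,False,False,False)))))))))))"

definition Zb :: b4 where "Zb = (False,False,False,False)"
definition Ob :: b4 where "Ob = (True,False,False,False)"
definition cycb :: "b4 \<Rightarrow> b4 \<Rightarrow> b4" where
  "cycb g x = (if x = Zb then Ob else if x = Ob then g else if x = g then Zb else x)"
definition Fb :: "b4 \<Rightarrow> b4 \<Rightarrow> b4" where "Fb g x = binv (cycb g x)"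
definition okb :: "b4 \<Rightarrow> b4 \<Rightarrow> b4 \<times> b4 \<times> b4 \<times> b4 \<times> b4 \<Rightarrow> bool" where
  "okb g c w = (case w of (a,b,x1,x2,x3) \<Rightarrow> x1 \<noteq> x2 \<and> x1 \<noteq> x3 \<and> x2 \<noteq> x3 \<and>
     (\<forall>x\<in>{x1,x2,x3}. bxor (Fb g (bxor x a)) (bmul c (Fb g x)) = b))"

lemma wit_ok:
  assumes "g \<noteq> Zb" "g \<noteq> Ob" "c \<noteq> Zb" "c \<noteq> Ob"
  shows "okb g c (wit g c)"
proof -
  obtain g0 g1 g2 g3 where g: "g = (g0,g1,g2,g3)" by (cases g) auto
  obtain c0 c1 c2 c3 where c: "c = (c0,c1,c2,c3)" by (cases c) auto
  show ?thesis using assms unfolding g c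
    by (cases g0; cases g1; cases g2; cases g3; cases c0; cases c1; cases c2; cases c3)
       (simp_all add: okb_def wit_def Fb_def cycb_def Zb_def Ob_def bxor_def bmul_def Let_def)
qed

lemma binv_mul: "u \<noteq> Zb \<Longrightarrow> bmul u (binv u) = Ob"
proof -
  obtain p0 p1 p2 p3 where u: "u = (p0,p1,p2,p3)" by (cases u) auto
  show "u \<noteq> Zb \<Longrightarrow> bmul u (binv u) = Ob" unfolding u
    by (cases p0; cases p1; cases p2; cases p3) (simp_all add: Zb_def Ob_def bmul_def Let_def)
qed

lemma bxor_Z: "bxor u v = Zb \<Longrightarrow> u = v"
proof -
  obtain p0 p1 p2 p3 where u: "u = (p0,p1,p2,p3)" by (cases u) auto
  obtain q0 q1 q2 q3 where v: "v = (q0,q1,q2,q3)" by (cases v) auto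
  show "bxor u v = Zb \<Longrightarrow> u = v" unfolding u v by (auto simp: bxor_def Zb_def)
qed

lemma Ev_Z: "Ev \<alpha> Zb = 0" by (simp add: Ev_def Zb_def)
lemma Ev_O: "Ev \<alpha> Ob = 1" by (simp add: Ev_def Ob_def)

lemma Ev_nz:
  assumes ch: "(1::'a::field)+1=0" and al: "(\<alpha>::'a)^4 + \<alpha> + 1 = 0" and u: "u \<noteq> Zb"
  shows "Ev \<alpha> u \<noteq> 0"
proof
  assume h: "Ev \<alpha> u = 0"
  have "Ev \<alpha> u * Ev \<alpha> (binv u) = Ev \<alpha> (bmul u (binv u))" by (rule Ev_mul[OF ch al])
  also have "\<dots> = 1" unfolding binv_mul[OF u] by (rule Ev_O)
  finally show False using h by simp
qed

lemma Ev_inj: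
  assumes ch: "(1::'a::field)+1=0" and al: "(\<alpha>::'a)^4 + \<alpha> + 1 = 0" and e: "Ev \<alpha> u = Ev \<alpha> v"
  shows "u = v"
proof -
  have "Ev \<alpha> (bxor u v) = 0" using Ev_add[OF ch, of \<alpha> u v] e char2_add[OF ch] by simp
  then have "bxor u v = Zb" using Ev_nz[OF ch al] by blast
  then show ?thesis by (rule bxor_Z)
qed

lemma card_b4: "card (UNIV :: b4 set) = 16"
  by (simp add: UNIV_Times_UNIV[symmetric] card_cartesian_product del: UNIV_Times_UNIV)

lemma Ev_surj:
  assumes ch: "(1::'a::{field,finite})+1=0" and al: "(\<alpha>::'a)^4 + \<alpha> + 1 = 0" and card: "CARD('a) = 16"
  shows "\<exists>u. x = Ev \<alpha> u"
proof -
  have "inj (Ev \<alpha>)" using Ev_inj[OF ch al] by (auto simp: inj_def)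
  then have "card (range (Ev \<alpha>)) = 16" using card_b4 by (simp add: card_image)
  then have "range (Ev \<alpha>) = UNIV" using card by (simp add: card_subset_eq)
  then have "x \<in> range (Ev \<alpha>)" by simp
  then show ?thesis by blast
qed

lemma Ev_inv:
  assumes ch: "(1::'a::field)+1=0" and al: "(\<alpha>::'a)^4 + \<alpha> + 1 = 0"
  shows "inverse (Ev \<alpha> u) = Ev \<alpha> (binv u)"
proof (cases "u = Zb")
  case True
  then have "u = (False,False,False,False)" by (simp add: Zb_def)
  then show ?thesis by (simp add: Ev_def)
next
  case False
  have "Ev \<alpha> u * Ev \<alpha> (binv u) = Ev \<alpha> (bmul u (binv u))" by (rule Ev_mul[OF ch al])
  also have "\<dots> = 1" unfolding binv_mul[OF False] by (rule Ev_O)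
  finally have "Ev \<alpha> u * Ev \<alpha> (binv u) = 1" .
  then show ?thesis by (rule inverse_unique)
qed

lemma Ev_cyc:
  assumes ch: "(1::'a::field)+1=0" and al: "(\<alpha>::'a)^4 + \<alpha> + 1 = 0"
  shows "cyc3 (Ev \<alpha> g) (Ev \<alpha> x) = Ev \<alpha> (cycb g x)"
proof -
  have i: "Ev \<alpha> x = Ev \<alpha> y \<longleftrightarrow> x = y" for x y using Ev_inj[OF ch al] by blast
  have z: "Ev \<alpha> x = 0 \<longleftrightarrow> x = Zb" using i[of x Zb] by (simp add: Ev_Z)
  have o: "Ev \<alpha> x = 1 \<longleftrightarrow> x = Ob" using i[of x Ob] by (simp add: Ev_O)
  have OZ: "Ob \<noteq> Zb" by (simp add: Ob_def Zb_def)
  show ?thesis unfolding cyc3_def cycb_def using z o i[of x g] OZ by (simp add: Ev_Z Ev_O)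
qed

lemma lower16:
  fixes c \<gamma> :: "'a::{field,finite}"
  assumes ch: "(1::'a)+1=0" and c0: "c \<noteq> 0" and c1: "c \<noteq> 1" and g0: "\<gamma> \<noteq> 0" and g1: "\<gamma> \<noteq> 1"
    and card: "CARD('a) = 16"
  defines "F \<equiv> (\<lambda>x. inverse (cyc3 \<gamma> x))"
  shows "\<exists>a b. 3 \<le> card {x. F (x + a) + c * F x = b}"
proof -
  obtain \<alpha> :: 'a where al: "\<alpha>^4 + \<alpha> + 1 = 0" using ex_alpha[OF card ch] by blast
  obtain g where g: "\<gamma> = Ev \<alpha> g" using Ev_surj[OF ch al card] by blast
  obtain cb where cb: "c = Ev \<alpha> cb" using Ev_surj[OF ch al card] by blast
  have gZ: "g \<noteq> Zb" using g g0 Ev_Z by auto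
  have gO: "g \<noteq> Ob" using g g1 Ev_O by auto
  have cZ: "cb \<noteq> Zb" using cb c0 Ev_Z by auto
  have cO: "cb \<noteq> Ob" using cb c1 Ev_O by auto
  obtain a b x1 x2 x3 where w: "wit g cb = (a,b,x1,x2,x3)" by (cases "wit g cb") auto
  have ok: "okb g cb (a,b,x1,x2,x3)" using wit_ok[OF gZ gO cZ cO] w by simp
  have FE: "F (Ev \<alpha> y) = Ev \<alpha> (Fb g y)" for y
    unfolding F_def g Fb_def using Ev_cyc[OF ch al] Ev_inv[OF ch al] by simp
  have sol: "Ev \<alpha> x \<in> {x. F (x + Ev \<alpha> a) + c * F x = Ev \<alpha> b}" if "x \<in> {x1,x2,x3}" for x
  proof -
    have e: "bxor (Fb g (bxor x a)) (bmul cb (Fb g x)) = b" using ok that unfolding okb_def by auto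
    have "F (Ev \<alpha> x + Ev \<alpha> a) + c * F (Ev \<alpha> x) = Ev \<alpha> (bxor (Fb g (bxor x a)) (bmul cb (Fb g x)))"
      unfolding cb Ev_add[OF ch] FE Ev_mul[OF ch al] ..
    then show ?thesis using e by simp
  qed
  have d: "x1 \<noteq> x2" "x1 \<noteq> x3" "x2 \<noteq> x3" using ok unfolding okb_def by auto
  have dE: "Ev \<alpha> x1 \<noteq> Ev \<alpha> x2" "Ev \<alpha> x1 \<noteq> Ev \<alpha> x3" "Ev \<alpha> x2 \<noteq> Ev \<alpha> x3"
    using d Ev_inj[OF ch al] by blast+
  have sub: "{Ev \<alpha> x1, Ev \<alpha> x2, Ev \<alpha> x3} \<subseteq> {x. F (x + Ev \<alpha> a) + c * F x = Ev \<alpha> b}"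
    using sol by blast
  have "3 = card {Ev \<alpha> x1, Ev \<alpha> x2, Ev \<alpha> x3}" using dE by simp
  also have "\<dots> \<le> card {x. F (x + Ev \<alpha> a) + c * F x = Ev \<alpha> b}" by (rule card_mono[OF _ sub]) simp
  finally show ?thesis by blast
qed

theorem mainTheorem6:
  fixes c \<gamma> :: "'a::{field,finite}" and n :: nat
  assumes "CARD('a) = 2 ^ n" and "n \<ge> 4"
    and "(1::'a) + 1 = 0"
    and "c \<noteq> 0" and "c \<noteq> 1" and "\<gamma> \<noteq> 0" and "\<gamma> \<noteq> 1"
  shows "3 \<le> cDelta (Inv \<circ> cyc3 \<gamma>) c \<and> cDelta (Inv \<circ> cyc3 \<gamma>) c \<le> 5"
proof -
  note cardq = assms(1) and n4 = assms(2) and ch = assms(3) and c0 = assms(4) and c1 = assms(5)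
    and g0 = assms(6) and g1 = assms(7)
  have "(2::nat)^4 \<le> 2^n" using n4 by (rule power_increasing) simp
  then have q16: "CARD('a) \<ge> 16" using cardq by simp
  define F where "F = (\<lambda>x. inverse (cyc3 \<gamma> x))"
  have FI: "Inv \<circ> cyc3 \<gamma> = F"
    unfolding F_def using Inv_inverse[of "cyc3 \<gamma> _"] q16 by (auto simp: fun_eq_iff)
  define M where "M = {cDeltaAt F c a b | a b. a \<noteq> 0 \<or> c \<noteq> 1}"
  have M: "M = (\<lambda>(a,b). card {x. F (x + a) + c * F x = b}) ` UNIV"
    unfolding M_def cDeltaAt_def using c1 by auto
  have finM: "finite M" unfolding M by simp
  have neM: "M \<noteq> {}" unfolding M by simp
  have up: "m \<le> 5" if "m \<in> M" for m
  proof -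
    obtain a b where "m = card {x. F (x + a) + c * F x = b}" using \<open>m \<in> M\<close> unfolding M by auto
    then show ?thesis using upper_bound[OF ch c0 c1 g0 g1, of a b] unfolding F_def by simp
  qed
  have "\<exists>a b. 3 \<le> card {x. F (x + a) + c * F x = b}"
  proof (cases "n = 4")
    case True
    then have "CARD('a) = 16" using cardq by simp
    then show ?thesis using lower16[OF ch c0 c1 g0 g1] unfolding F_def by blast
  next
    case False
    then have "(2::nat)^5 \<le> 2^n" using n4 by (intro power_increasing) simp_all
    then have "CARD('a) \<ge> 29" using cardq by simp
    then show ?thesis using lower_big[OF ch c0 c1 g0 g1] unfolding F_def by blast
  qed
  then obtain a b where ab: "3 \<le> card {x. F (x + a) + c * F x = b}" by blast
  have "card {x. F (x + a) + c * F x = b} \<in> M" unfolding M by auto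
  then have lo: "3 \<le> Max M" using ab Max_ge[OF finM] le_trans by blast
  have hi: "Max M \<le> 5" using up finM neM by simp
  have "cDelta (Inv \<circ> cyc3 \<gamma>) c = Max M" unfolding FI cDelta_def M_def ..
  then show ?thesis using lo hi by simp
qed

end
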